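(* Let $A$ be a symmetric adornment with base $[x,y]$. Then $A$ is slender if and only if $A$ is a union of sets of the form $B(x,r)\cap B(y,s)$ (for some family of radius pairs $(r,s)$), where $B(c,\rho)$ denotes the closed disk of radius $\rho$ centered at $c$.
   Context: An adornment is a compact simply connected region $S\subset\mathbb{R}^2$ together with a segment $[x,y]$, $x\neq y$, whose endpoints lie on the boundary of $S$ and with $[x,y]\subseteq S$ (the base). The boundary of $S$ consists of two arcs from $x$ to $y$ (the sides). The adornment is slender if, for a point $p$ moving along either side from $x$ to $y$, $\|p-x\|$ is nondecreasing and $\|p-y\|$ is nonincreasing. It is symmetric if invariant under reflection in the line through $x,y$. *)

theory Defs
  imports "HOL-Analysis.Analysis"
begin

text \<open>The plane is modelled as the type complex (Euclidean R^2).\<close>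

definition side :: "complex set \<Rightarrow> complex \<Rightarrow> complex \<Rightarrow> (real \<Rightarrow> complex) \<Rightarrow> bool" where
  "side S x y g \<longleftrightarrow> arc g \<and> pathstart g = x \<and> pathfinish g = y \<and> path_image g \<subseteq> frontier S"

definition adornment :: "complex set \<Rightarrow> complex \<Rightarrow> complex \<Rightarrow> bool" where
  "adornment S x y \<longleftrightarrow>
     compact S \<and> simply_connected S \<and> connected (interior S) \<and> S = closure (interior S) \<and>
     x \<noteq> y \<and> x \<in> frontier S \<and> y \<in> frontier S \<and> closed_segment x y \<subseteq> S \<and>
     (\<exists>g1 g2. side S x y g1 \<and> side S x y g2 \<and>
        path_image g1 \<inter> path_image g2 = {x, y} \<and>
        frontier S = path_image g1 \<union> path_image g2)"

definition slender :: "complex set \<Rightarrow> complex \<Rightarrow> complex \<Rightarrow> bool" where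
  "slender S x y \<longleftrightarrow>
     (\<forall>g. side S x y g \<longrightarrow>
        (\<forall>s\<in>{0..1}. \<forall>t\<in>{0..1}. s \<le> t \<longrightarrow>
            dist (g s) x \<le> dist (g t) x \<and> dist (g t) y \<le> dist (g s) y))"

definition refl_line :: "complex \<Rightarrow> complex \<Rightarrow> complex \<Rightarrow> complex" where
  "refl_line x y z = x + (y - x) * cnj ((z - x) / (y - x))"

definition symmetric_adornment :: "complex set \<Rightarrow> complex \<Rightarrow> complex \<Rightarrow> bool" where
  "symmetric_adornment S x y \<longleftrightarrow> adornment S x y \<and> refl_line x y ` S = S"

end

theory Submission
  imports Defs
begin

definition nrm :: "complex \<Rightarrow> complex \<Rightarrow> complex \<Rightarrow> complex" where
  "nrm x y z = (z - x) / (y - x)"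

lemma nrm_eq: "x \<noteq> y \<Longrightarrow> z = x + (y - x) * nrm x y z"
  by (simp add: nrm_def)

lemma dist_x_nrm: "x \<noteq> y \<Longrightarrow> dist z x = cmod (y - x) * cmod (nrm x y z)"
  by (simp add: nrm_def dist_norm norm_divide)

lemma dist_y_nrm: "x \<noteq> y \<Longrightarrow> dist z y = cmod (y - x) * cmod (nrm x y z - 1)"
proof -
  assume "x \<noteq> y"
  then have "z - y = (y - x) * (nrm x y z - 1)" by (simp add: nrm_def field_simps)
  then show ?thesis by (simp add: dist_norm norm_mult)
qed

lemma nrm_refl: "x \<noteq> y \<Longrightarrow> nrm x y (refl_line x y z) = cnj (nrm x y z)"
  by (simp add: nrm_def refl_line_def)

lemma refl_refl: "x \<noteq> y \<Longrightarrow> refl_line x y (refl_line x y z) = z"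
  by (simp add: refl_line_def)

lemma refl_x: "refl_line x y x = x" by (simp add: refl_line_def)
lemma refl_y: "x \<noteq> y \<Longrightarrow> refl_line x y y = y" by (simp add: refl_line_def)

lemma dist_refl: "x \<noteq> y \<Longrightarrow> dist (refl_line x y z) (refl_line x y w) = dist z w"
proof -
  assume False: "x \<noteq> y"
  have "refl_line x y z - refl_line x y w = (y - x) * cnj ((z - w)/(y - x))"
    by (simp add: refl_line_def algebra_simps diff_divide_distrib)
  moreover have "cmod (cnj ((z - w)/(y - x))) = cmod (z - w) / cmod (y - x)"
    by (simp only: complex_mod_cnj norm_divide)
  ultimately show ?thesis using False unfolding dist_norm by (simp only: norm_mult) simp
qed

lemma dist_refl_x: "x \<noteq> y \<Longrightarrow> dist (refl_line x y z) x = dist z x"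
  by (metis dist_refl refl_x)
lemma dist_refl_y: "x \<noteq> y \<Longrightarrow> dist (refl_line x y z) y = dist z y"
  by (metis dist_refl refl_y)

lemma continuous_refl: "x \<noteq> y \<Longrightarrow> continuous_on A (refl_line x y)"
  unfolding refl_line_def by (intro continuous_intros) auto

lemma continuous_nrm: "x \<noteq> y \<Longrightarrow> continuous_on A (nrm x y)"
  unfolding nrm_def by (intro continuous_intros) auto

lemma same_ab:
  assumes "x \<noteq> y" "dist z x = dist w x" "dist z y = dist w y"
  shows "Re (nrm x y w) = Re (nrm x y z) \<and> \<bar>Im (nrm x y w)\<bar> = \<bar>Im (nrm x y z)\<bar>"
proof -
  have d: "cmod (y - x) > 0" using assms by simp
  have 1: "cmod (nrm x y z) = cmod (nrm x y w)" using assms(2) dist_x_nrm[OF assms(1)] d by auto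
  have 2: "cmod (nrm x y z - 1) = cmod (nrm x y w - 1)" using assms(3) dist_y_nrm[OF assms(1)] d by auto
  define a where "a = nrm x y z" define b where "b = nrm x y w"
  have "(cmod a)^2 = (cmod b)^2" using 1 unfolding a_def b_def by simp
  then have 1: "(Re a)^2 + (Im a)^2 = (Re b)^2 + (Im b)^2" by (simp only: cmod_power2)
  have "(cmod (a - 1))^2 = (cmod (b - 1))^2" using 2 unfolding a_def b_def by simp
  then have 2: "(Re a - 1)^2 + (Im a)^2 = (Re b - 1)^2 + (Im b)^2" by (simp add: cmod_power2)
  have "Re a = Re b" using 1 2 by (simp add: power2_eq_square algebra_simps)
  moreover then have "(Im a)^2 = (Im b)^2" using 1 by simp
  then have "\<bar>Im a\<bar> = \<bar>Im b\<bar>" by (metis abs_power2 power2_eq_iff real_sqrt_abs)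
  ultimately show ?thesis unfolding a_def b_def by simp
qed

lemma same_ab_eq:
  assumes "x \<noteq> y" "dist z x = dist w x" "dist z y = dist w y"
    "Im (nrm x y z) * Im (nrm x y w) > 0"
  shows "w = z"
proof -
  from same_ab[OF assms(1-3)] have r: "Re (nrm x y w) = Re (nrm x y z)"
    and i: "\<bar>Im (nrm x y w)\<bar> = \<bar>Im (nrm x y z)\<bar>" by auto
  from i assms(4) have "Im (nrm x y w) = Im (nrm x y z)"
    by (auto simp: abs_if zero_less_mult_iff split: if_splits)
  with r have "nrm x y w = nrm x y z" by (simp add: complex_eq_iff)
  then show ?thesis using nrm_eq[OF assms(1), of w] nrm_eq[OF assms(1), of z] by simp
qed

lemma same_ab_refl:
  assumes "x \<noteq> y" "dist z x = dist w x" "dist z y = dist w y"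
  shows "w = z \<or> w = refl_line x y z"
proof -
  from same_ab[OF assms(1-3)] have r: "Re (nrm x y w) = Re (nrm x y z)"
    and i: "\<bar>Im (nrm x y w)\<bar> = \<bar>Im (nrm x y z)\<bar>" by auto
  from i have "Im (nrm x y w) = Im (nrm x y z) \<or> Im (nrm x y w) = - Im (nrm x y z)"
    by (auto simp: abs_if split: if_splits)
  with r have "nrm x y w = nrm x y z \<or> nrm x y w = cnj (nrm x y z)" by (auto simp: complex_eq_iff)
  then show ?thesis using nrm_eq[OF assms(1), of w] nrm_eq[OF assms(1), of z] 
     nrm_eq[OF assms(1), of "refl_line x y z"] nrm_refl[OF assms(1), of z] by metis
qed


lemma side_facts:
  assumes "side S x y g"
  shows "arc g" "path g" "g 0 = x" "g 1 = y" "path_image g \<subseteq> frontier S"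
    "\<And>t. t \<in> {0..1} \<Longrightarrow> g t \<in> frontier S"
  using assms unfolding side_def pathstart_def pathfinish_def path_image_def
  by (auto simp: arc_imp_path)

lemma side_inner:
  assumes "side S x y g" "t \<in> {0<..<1}"
  shows "g t \<noteq> x" "g t \<noteq> y"
proof -
  have inj: "inj_on g {0..1}" using side_facts(1)[OF assms(1)] arc_imp_inj_on by blast
  show "g t \<noteq> x" using inj_onD[OF inj, of t 0] assms side_facts(3)[OF assms(1)] by auto
  show "g t \<noteq> y" using inj_onD[OF inj, of t 1] assms side_facts(4)[OF assms(1)] by auto
qed

lemma mid_lemma:
  assumes xy: "x \<noteq> y" and g: "arc g" "g 0 = x" "g 1 = y"
    and R0: "\<forall>t\<in>{0<..<1}. refl_line x y (g t) \<in> path_image g"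
  shows "(x + y) / 2 \<in> path_image g"
proof -
  obtain h where hom: "homeomorphism {0..1} (path_image g) g h"
    using homeomorphism_arc[OF g(1)] by blast
  have hg: "\<And>t. t \<in> {0..1} \<Longrightarrow> h (g t) = t" and gh: "\<And>w. w \<in> path_image g \<Longrightarrow> g (h w) = w"
    and himg: "h ` path_image g = {0..1}" and hcont: "continuous_on (path_image g) h"
    using hom unfolding homeomorphism_def by auto
  have R: "\<forall>t\<in>{0..1}. refl_line x y (g t) \<in> path_image g"
  proof
    fix t :: real assume t: "t \<in> {0..1}"
    show "refl_line x y (g t) \<in> path_image g"
    proof (cases "t = 0 \<or> t = 1")
      case True
      then show ?thesis using g refl_x[of x y] refl_y[OF xy] unfolding path_image_def
        by (metis atLeastAtMost_iff image_eqI order_refl zero_le_one)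
    next
      case False then show ?thesis using R0 t by auto
    qed
  qed
  define \<phi> where "\<phi> t = h (refl_line x y (g t))" for t
  have pg: "path g" using g(1) arc_imp_path by blast
  have cont: "continuous_on {0..1} \<phi>" unfolding \<phi>_def
  proof (rule continuous_on_compose2[OF hcont])
    show "continuous_on {0..1} (\<lambda>t. refl_line x y (g t))"
      using continuous_on_compose2[OF continuous_refl[OF xy, of UNIV] pg[unfolded path_def]] by auto
    show "(\<lambda>t. refl_line x y (g t)) ` {0..1} \<subseteq> path_image g" using R by auto
  qed
  have range: "\<phi> t \<in> {0..1}" if "t \<in> {0..1}" for t
    using R that himg unfolding \<phi>_def by blast
  have inj: "inj_on \<phi> {0..1}"
  proof (rule inj_onI)
    fix s t assume s: "s \<in> {0..1}" and t: "t \<in> {0..1}" and e: "\<phi> s = \<phi> t"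
    then have "g (\<phi> s) = g (\<phi> t)" by simp
    then have "refl_line x y (g s) = refl_line x y (g t)" using gh R s t unfolding \<phi>_def by auto
    then have "g s = g t" by (metis refl_refl[OF xy])
    then show "s = t" using arc_imp_inj_on[OF g(1)] s t by (auto dest: inj_onD)
  qed
  have p0: "\<phi> 0 = 0" unfolding \<phi>_def using g refl_x[of x y] hg[of 0] by auto
  have p1: "\<phi> 1 = 1" unfolding \<phi>_def using g refl_y[OF xy] hg[of 1] by auto
  have "strict_mono_on {0..1} \<phi> \<or> strict_antimono_on {0..1} \<phi>"
    using injective_eq_monotone_map[of "{0..1}" \<phi>] cont inj is_interval_cc by blast
  moreover have "\<not> strict_antimono_on {0..1} \<phi>"
  proof
    assume "strict_antimono_on {0..1} \<phi>"
    then have "\<phi> 0 > \<phi> 1" unfolding monotone_on_def by auto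
    then show False using p0 p1 by simp
  qed
  ultimately have mono: "strict_mono_on {0..1} \<phi>" by blast
  have invol: "\<phi> (\<phi> t) = t" if "t \<in> {0..1}" for t
  proof -
    have "\<phi> (\<phi> t) = h (refl_line x y (refl_line x y (g t)))"
      unfolding \<phi>_def using gh R that by auto
    also have "\<dots> = t" using refl_refl[OF xy] hg that by simp
    finally show ?thesis .
  qed
  have fixp: "\<phi> t = t" if t: "t \<in> {0..1}" for t
  proof (rule ccontr)
    assume "\<phi> t \<noteq> t"
    then consider "\<phi> t < t" | "\<phi> t > t" by linarith
    then show False
    proof cases
      case 1
      then have "\<phi> (\<phi> t) < \<phi> t" using mono range[OF t] t unfolding monotone_on_def by auto
      then show False using invol[OF t] 1 by simp
    next
      case 2
      then have "\<phi> (\<phi> t) > \<phi> t" using mono range[OF t] t unfolding monotone_on_def by auto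
      then show False using invol[OF t] 2 by simp
    qed
  qed
  have onl: "Im (nrm x y (g t)) = 0" if t: "t \<in> {0..1}" for t
  proof -
    have "refl_line x y (g t) = g t" using gh[of "refl_line x y (g t)"] R t fixp[OF t]
      unfolding \<phi>_def by auto
    then have "cnj (nrm x y (g t)) = nrm x y (g t)" using nrm_refl[OF xy, of "g t"] by simp
    then show ?thesis by (metis Reals_cnj_iff complex_is_Real_iff)
  qed
  have c2: "continuous_on {0..1} (\<lambda>t. Re (nrm x y (g t)))"
    using continuous_on_compose2[OF continuous_nrm[OF xy, of UNIV] pg[unfolded path_def]]
    by (auto intro: continuous_intros)
  have "Re (nrm x y (g 0)) = 0" "Re (nrm x y (g 1)) = 1" using g xy by (auto simp: nrm_def)
  then obtain t where t: "0 \<le> t" "t \<le> 1" "Re (nrm x y (g t)) = 1/2"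
    using IVT'[of "\<lambda>t. Re (nrm x y (g t))" 0 "1/2" 1] c2 by auto
  then have "nrm x y (g t) = 1/2" using onl[of t] by (simp add: complex_eq_iff)
  then have "g t = x + (y - x) * (1/2)" by (metis nrm_eq[OF xy])
  then have "g t = (x + y)/2" by (simp add: field_simps)
  then show ?thesis using t unfolding path_image_def by force
qed


locale adorn =
  fixes S :: "complex set" and x y :: complex and g1 g2 :: "real \<Rightarrow> complex"
  assumes sa: "symmetric_adornment S x y"
    and s1: "side S x y g1" and s2: "side S x y g2"
    and int12: "path_image g1 \<inter> path_image g2 = {x, y}"
    and fr: "frontier S = path_image g1 \<union> path_image g2"
begin

lemma swap: "adorn S x y g2 g1"
  using sa s1 s2 int12 fr by unfold_locales auto

lemma xy: "x \<noteq> y" using sa unfolding symmetric_adornment_def adornment_def by auto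
lemma cpt: "compact S" using sa unfolding symmetric_adornment_def adornment_def by auto
lemma cl: "closed S" using cpt compact_imp_closed by blast
lemma bd: "bounded S" using cpt compact_imp_bounded by blast
lemma frS: "frontier S \<subseteq> S" using cl frontier_subset_closed by blast
lemma seg: "closed_segment x y \<subseteq> S" using sa unfolding symmetric_adornment_def adornment_def by auto
lemma reflS: "refl_line x y ` S = S" using sa unfolding symmetric_adornment_def by auto

lemma refl_mem: "refl_line x y z \<in> S \<longleftrightarrow> z \<in> S"
proof
  assume "refl_line x y z \<in> S"
  then have "refl_line x y (refl_line x y z) \<in> S" using reflS by blast
  then show "z \<in> S" using refl_refl[OF xy] by simp
next
  assume "z \<in> S" then show "refl_line x y z \<in> S" using reflS by blast
qed

lemma refl_frontier: "z \<in> frontier S \<Longrightarrow> refl_line x y z \<in> frontier S"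
  unfolding frontier_straddle
proof (intro allI impI conjI)
  fix e :: real assume H: "\<forall>e>0. (\<exists>w\<in>S. dist z w < e) \<and> (\<exists>w. w \<notin> S \<and> dist z w < e)" and e: "e > 0"
  from H e obtain w where "w \<in> S" "dist z w < e" by blast
  then show "\<exists>w\<in>S. dist (refl_line x y z) w < e"
    by (intro bexI[of _ "refl_line x y w"]) (auto simp: dist_refl[OF xy] refl_mem)
  from H e obtain w where "w \<notin> S" "dist z w < e" by blast
  then show "\<exists>w. w \<notin> S \<and> dist (refl_line x y z) w < e"
    by (intro exI[of _ "refl_line x y w"]) (auto simp: dist_refl[OF xy] refl_mem)
qed

lemma side_refl: "side S x y g \<Longrightarrow> side S x y (refl_line x y \<circ> g)"
proof -
  assume g: "side S x y g"
  have "path (refl_line x y \<circ> g)"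
    using side_facts(2)[OF g] continuous_on_compose[of "{0..1}" g "refl_line x y"] continuous_refl[OF xy]
    unfolding path_def by blast
  moreover have "inj_on (refl_line x y \<circ> g) {0..1}"
    using arc_imp_inj_on[OF side_facts(1)[OF g]] refl_refl[OF xy]
    by (metis comp_inj_on inj_on_inverseI)
  moreover have "path_image (refl_line x y \<circ> g) \<subseteq> frontier S"
    using side_facts(5)[OF g] refl_frontier unfolding path_image_compose by blast
  ultimately show ?thesis using g refl_x[of x y] refl_y[OF xy]
    unfolding side_def arc_def pathstart_def pathfinish_def by auto
qed

lemma sideA:
  assumes g: "side S x y g"
  shows "(\<forall>t\<in>{0<..<1}. g t \<in> path_image g1) \<or> (\<forall>t\<in>{0<..<1}. g t \<in> path_image g2)"
proof -
  let ?C = "g ` {0<..<1}"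
  have "connected ?C"
    using side_facts(2)[OF g] unfolding path_def
    by (intro connected_continuous_image) (auto intro: continuous_on_subset)
  moreover have "closed (path_image g1)" "closed (path_image g2)"
    using side_facts(2)[OF s1] side_facts(2)[OF s2] by (auto intro: compact_imp_closed)
  moreover have "?C \<subseteq> path_image g1 \<union> path_image g2" using side_facts(6)[OF g] fr by fastforce
  moreover have "path_image g1 \<inter> path_image g2 \<inter> ?C = {}"
    using int12 side_inner[OF g] by fastforce
  ultimately have "\<not> (path_image g1 \<inter> ?C \<noteq> {} \<and> path_image g2 \<inter> ?C \<noteq> {})"
    unfolding connected_closed by blast
  then show ?thesis using \<open>?C \<subseteq> path_image g1 \<union> path_image g2\<close> by blast
qed

lemma mid_not: "(x + y) / 2 \<notin> {x, y}"
  using xy by (auto simp: field_simps)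

lemma H1: "\<forall>t\<in>{0<..<1}. refl_line x y (g1 t) \<in> path_image g2"
proof (rule ccontr)
  assume nH: "\<not> ?thesis"
  have A1: "\<forall>t\<in>{0<..<1}. refl_line x y (g1 t) \<in> path_image g1"
    using sideA[OF side_refl[OF s1]] nH by auto
  then have m1: "(x + y)/2 \<in> path_image g1"
    using mid_lemma[OF xy side_facts(1,3,4)[OF s1]] by blast
  consider "\<forall>t\<in>{0<..<1}. refl_line x y (g2 t) \<in> path_image g1"
    | "\<forall>t\<in>{0<..<1}. refl_line x y (g2 t) \<in> path_image g2"
    using sideA[OF side_refl[OF s2]] by auto
  then show False
  proof cases
    case 1
    have h: "(1/2::real) \<in> {0<..<1}" by simp
    let ?z = "g2 (1/2)"
    have z2: "?z \<in> path_image g2" unfolding path_image_def by auto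
    have zx: "?z \<notin> {x, y}" using side_inner[OF s2 h] by auto
    have "refl_line x y ?z \<in> path_image g1" using 1 h by blast
    moreover have "refl_line x y ?z \<notin> {x, y}"
      using zx refl_refl[OF xy, of ?z] refl_x[of x y] refl_y[OF xy] by force
    ultimately obtain s where s: "s \<in> {0..1}" "g1 s = refl_line x y ?z"
      unfolding path_image_def by auto
    have "s \<noteq> 0" "s \<noteq> 1" using s side_facts(3,4)[OF s1] \<open>refl_line x y ?z \<notin> {x, y}\<close> by auto
    then have "s \<in> {0<..<1}" using s by auto
    then have "refl_line x y (g1 s) \<in> path_image g1" using A1 by blast
    then have "?z \<in> path_image g1" using s refl_refl[OF xy] by simp
    then show False using z2 zx int12 by blast
  next
    case 2
    then have "(x + y)/2 \<in> path_image g2"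
      using mid_lemma[OF xy side_facts(1,3,4)[OF s2]] by blast
    then show False using m1 int12 mid_not by blast
  qed
qed

end

lemma (in adorn) H2: "\<forall>t\<in>{0<..<1}. refl_line x y (g2 t) \<in> path_image g1"
  using adorn.H1[OF swap] .


context adorn begin

lemma im_refl: "Im (nrm x y (refl_line x y z)) = - Im (nrm x y z)"
  using nrm_refl[OF xy] by simp

lemma im0_fixed: "Im (nrm x y z) = 0 \<Longrightarrow> refl_line x y z = z"
proof -
  assume "Im (nrm x y z) = 0"
  then have "cnj (nrm x y z) = nrm x y z" by (simp add: complex_eq_iff)
  then have "nrm x y (refl_line x y z) = nrm x y z" using nrm_refl[OF xy] by simp
  then show ?thesis by (metis nrm_eq[OF xy])
qed

lemma in_P_inner:
  assumes "side S x y g" "z \<in> path_image g" "z \<notin> {x, y}"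
  shows "\<exists>s\<in>{0<..<1}. z = g s"
proof -
  obtain s where s: "s \<in> {0..1}" "z = g s" using assms(2) unfolding path_image_def by auto
  have "s \<noteq> 0" "s \<noteq> 1" using s assms(3) side_facts(3,4)[OF assms(1)] by auto
  then show ?thesis using s by auto
qed

lemma off_line1: "t \<in> {0<..<1} \<Longrightarrow> Im (nrm x y (g1 t)) \<noteq> 0"
proof
  assume t: "t \<in> {0<..<1}" and i: "Im (nrm x y (g1 t)) = 0"
  have "g1 t \<in> path_image g2" using H1 t im0_fixed[OF i] by metis
  moreover have "g1 t \<in> path_image g1" using t unfolding path_image_def by auto
  ultimately show False using int12 side_inner[OF s1 t] by blast
qed

lemma sign1:
  assumes u: "u \<in> {0<..<1}" and t: "t \<in> {0<..<1}"
  shows "Im (nrm x y (g1 u)) * Im (nrm x y (g1 t)) > 0"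
proof (rule ccontr)
  assume nc: "\<not> ?thesis"
  let ?f = "\<lambda>s. Im (nrm x y (g1 s))"
  have cont: "continuous_on {0<..<1} ?f"
    using side_facts(2)[OF s1] unfolding path_def
    by (intro continuous_on_compose2[OF continuous_nrm[OF xy, of UNIV]] continuous_intros)
       (auto intro: continuous_on_subset)
  then have conn: "connected (?f ` {0<..<1})" by (intro connected_continuous_image) auto
  have "?f u \<noteq> 0" "?f t \<noteq> 0" using off_line1 u t by auto
  with nc have "(?f u < 0 \<and> 0 < ?f t) \<or> (?f t < 0 \<and> 0 < ?f u)"
    by (auto simp: zero_less_mult_iff not_less linorder_neq_iff)
  moreover have fu: "?f u \<in> ?f ` {0<..<1}" and ft: "?f t \<in> ?f ` {0<..<1}" using u t by auto
  moreover note ci = conn[unfolded connected_iff_interval, rule_format]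
  ultimately have "0 \<in> ?f ` {0<..<1}"
    using ci[OF fu ft, of 0] ci[OF ft fu, of 0] by fastforce
  then show False using off_line1 by auto
qed

lemma sign12:
  assumes u: "u \<in> {0<..<1}" and t: "t \<in> {0<..<1}"
  shows "Im (nrm x y (g1 u)) * Im (nrm x y (g2 t)) < 0"
proof -
  have r: "refl_line x y (g1 u) \<in> path_image g2" using H1 u by blast
  have "refl_line x y (g1 u) \<notin> {x, y}"
    using side_inner[OF s1 u] refl_refl[OF xy, of "g1 u"] refl_x[of x y] refl_y[OF xy] by force
  then obtain s where s: "s \<in> {0<..<1}" "refl_line x y (g1 u) = g2 s"
    using in_P_inner[OF s2 r] by auto
  have P: "Im (nrm x y (g2 s)) * Im (nrm x y (g2 t)) > 0" using adorn.sign1[OF swap s(1) t] .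
  have e: "Im (nrm x y (g2 s)) = - Im (nrm x y (g1 u))" using im_refl[of "g1 u"] s(2) by simp
  show ?thesis using P unfolding e by simp
qed

lemma halfside:
  assumes g: "side S x y g" and u: "u \<in> {0<..<1}" and t: "t \<in> {0<..<1}"
  shows "Im (nrm x y (g u)) * Im (nrm x y (g t)) > 0"
proof -
  have nu: "g u \<notin> {x, y}" and nt: "g t \<notin> {x, y}" using side_inner[OF g] u t by auto
  from sideA[OF g] show ?thesis
  proof
    assume A: "\<forall>t\<in>{0<..<1}. g t \<in> path_image g1"
    obtain a where a: "a \<in> {0<..<1}" "g u = g1 a" using in_P_inner[OF s1 _ nu] A u by blast
    obtain b where b: "b \<in> {0<..<1}" "g t = g1 b" using in_P_inner[OF s1 _ nt] A t by blast
    show ?thesis using sign1[OF a(1) b(1)] a b by simp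
  next
    assume A: "\<forall>t\<in>{0<..<1}. g t \<in> path_image g2"
    obtain a where a: "a \<in> {0<..<1}" "g u = g2 a" using in_P_inner[OF s2 _ nu] A u by blast
    obtain b where b: "b \<in> {0<..<1}" "g t = g2 b" using in_P_inner[OF s2 _ nt] A t by blast
    show ?thesis using adorn.sign1[OF swap a(1) b(1)] a b by simp
  qed
qed

end

context adorn begin

lemma x_fr: "x \<in> frontier S" and y_fr: "y \<in> frontier S"
  using side_facts(3,4,6)[OF s1] by (metis atLeastAtMost_iff order_refl zero_le_one)+

lemma refl_ne_x: "z \<noteq> x \<Longrightarrow> refl_line x y z \<noteq> x"
  using refl_refl[OF xy, of z] refl_x[of x y] by metis

context
  assumes down: "\<And>z w. z \<in> S \<Longrightarrow> dist w x \<le> dist z x \<Longrightarrow> dist w y \<le> dist z y \<Longrightarrow> w \<in> S"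
begin

lemma antichain:
  assumes f: "f \<in> frontier S" and z: "z \<in> S" and a: "dist z x > dist f x" and b: "dist z y > dist f y"
  shows False
proof -
  let ?O = "ball x (dist z x) \<inter> ball y (dist z y)"
  have "?O \<subseteq> S" using down[OF z] by (auto simp: dist_commute)
  moreover have "open ?O" by auto
  ultimately have "?O \<subseteq> interior S" by (rule interior_maximal)
  moreover have "f \<in> ?O" using a b by (auto simp: dist_commute)
  ultimately show False using f unfolding frontier_def by auto
qed

lemma bound_y: "z \<in> frontier S \<Longrightarrow> dist z y \<le> dist x y"
proof (rule ccontr)
  assume z: "z \<in> frontier S" and c: "\<not> dist z y \<le> dist x y"
  then have "z \<noteq> x" by auto
  then have a: "dist z x > dist x x" by simp
  have zS: "z \<in> S" using z frS by auto
  have b: "dist z y > dist x y" using c by linarith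
  show False using antichain[OF x_fr zS a b] .
qed

lemma bound_x: "z \<in> frontier S \<Longrightarrow> dist z x \<le> dist x y"
proof (rule ccontr)
  assume z: "z \<in> frontier S" and c: "\<not> dist z x \<le> dist x y"
  then have "z \<noteq> y" by (auto simp: dist_commute)
  then have b: "dist z y > dist y y" by simp
  have zS: "z \<in> S" using z frS by auto
  have a: "dist z x > dist y x" using c by (simp add: dist_commute)
  show False using antichain[OF y_fr zS a b] .
qed

lemma step4:
  assumes g: "side S x y g" and t: "t \<in> {0<..<1}" and u: "u \<in> {0..<t}"
  shows "dist (g u) x \<le> dist (g t) x \<and> dist (g t) y \<le> dist (g u) y"
proof -
  define f where "f = g t"
  have f: "f \<in> frontier S" using side_facts(6)[OF g] t unfolding f_def by auto
  define NW where "NW = {w. dist w x \<le> dist f x \<and> dist f y \<le> dist w y}"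
  define SE where "SE = {w. dist f x \<le> dist w x \<and> dist w y \<le> dist f y}"
  let ?C = "g ` {0..<t}"
  have "connected ?C"
    using side_facts(2)[OF g] t unfolding path_def
    by (intro connected_continuous_image) (auto intro: continuous_on_subset)
  moreover have "closed NW" "closed SE" unfolding NW_def SE_def
    by (auto intro!: closed_Collect_conj closed_Collect_le continuous_intros)
  moreover have "?C \<subseteq> NW \<union> SE"
  proof
    fix w assume "w \<in> ?C"
    then obtain v where v: "v \<in> {0..<t}" "w = g v" by auto
    then have w: "w \<in> frontier S" using side_facts(6)[OF g] t by auto
    have "\<not> (dist w x > dist f x \<and> dist w y > dist f y)" using antichain[OF f] w frS by blast
    moreover have "\<not> (dist f x > dist w x \<and> dist f y > dist w y)" using antichain[OF w] f frS by blast
    ultimately show "w \<in> NW \<union> SE" unfolding NW_def SE_def by auto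
  qed
  moreover have "NW \<inter> SE \<inter> ?C = {}"
  proof (rule ccontr)
    assume "NW \<inter> SE \<inter> ?C \<noteq> {}"
    then obtain v where v: "v \<in> {0..<t}" "g v \<in> NW" "g v \<in> SE" by blast
    then have e1: "dist f x = dist (g v) x" and e2: "dist f y = dist (g v) y"
      unfolding NW_def SE_def by auto
    from same_ab_refl[OF xy e1 e2] show False
    proof
      assume "g v = f"
      then show False using arc_imp_inj_on[OF side_facts(1)[OF g]] v t unfolding f_def
        by (auto dest: inj_onD)
    next
      assume r: "g v = refl_line x y f"
      show False
      proof (cases "v = 0")
        case True
        then have "refl_line x y f = x" using r side_facts(3)[OF g] by simp
        then show False using refl_ne_x side_inner(1)[OF g t] unfolding f_def by blast
      next
        case False
        then have v': "v \<in> {0<..<1}" using v t by auto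
        have "Im (nrm x y (g v)) * Im (nrm x y (g t)) > 0" using halfside[OF g v' t] .
        moreover have "Im (nrm x y (g v)) = - Im (nrm x y (g t))" using r im_refl unfolding f_def by simp
        ultimately show False by (simp add: mult_le_0_iff)
      qed
    qed
  qed
  moreover have "x \<in> NW \<inter> ?C"
  proof -
    have "x = g 0" using side_facts(3)[OF g] by simp
    moreover have "0 \<in> {0..<t}" using t by auto
    moreover have "dist f y \<le> dist x y" using bound_y[OF f] .
    ultimately show ?thesis unfolding NW_def by auto
  qed
  ultimately have "SE \<inter> ?C = {}" unfolding connected_closed by blast
  then have "g u \<in> NW" using \<open>?C \<subseteq> NW \<union> SE\<close> u by blast
  then show ?thesis unfolding NW_def f_def by auto
qed

lemma slender_if_down: "slender S x y"
  unfolding slender_def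
proof (intro allI impI ballI)
  fix g and s t :: real assume g: "side S x y g" and s: "s \<in> {0..1}" and t: "t \<in> {0..1}" and st: "s \<le> t"
  show "dist (g s) x \<le> dist (g t) x \<and> dist (g t) y \<le> dist (g s) y"
  proof (cases "s = t")
    case True then show ?thesis by simp
  next
    case False
    show ?thesis
    proof (cases "t = 1")
      case True
      have "g s \<in> frontier S" using side_facts(6)[OF g] s by auto
      then have "dist (g s) x \<le> dist x y" by (rule bound_x)
      then show ?thesis using True side_facts(4)[OF g] by (simp add: dist_commute)
    next
      case False
      then have "t \<in> {0<..<1}" using s t st \<open>s \<noteq> t\<close> by auto
      then show ?thesis using step4[OF g] s st \<open>s \<noteq> t\<close> by auto
    qed
  qed
qed

end
end

lemma sum_gt:
  assumes "Im n \<noteq> 0"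
  shows "cmod n + cmod (n - 1) > 1"
proof -
  have "\<bar>Re n\<bar> = sqrt ((Re n)^2)" by simp
  also have "\<dots> < sqrt ((Re n)^2 + (Im n)^2)" using assms by (intro real_sqrt_less_mono) simp
  also have "\<dots> = cmod n" by (simp add: cmod_def)
  finally have 1: "\<bar>Re n\<bar> < cmod n" .
  have 2: "\<bar>Re n - 1\<bar> \<le> cmod (n - 1)" using abs_Re_le_cmod[of "n - 1"] by simp
  show ?thesis using 1 2 by linarith
qed

context adorn begin

context
  assumes sl: "slender S x y"
begin

lemma slg: "side S x y g \<Longrightarrow> s \<in> {0..1} \<Longrightarrow> t \<in> {0..1} \<Longrightarrow> s \<le> t \<Longrightarrow>
   dist (g s) x \<le> dist (g t) x \<and> dist (g t) y \<le> dist (g s) y"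
  using sl unfolding slender_def by blast

lemma Q1:
  assumes s0: "s0 \<in> {0<..<1}" and wx: "dist w x \<le> dist (g1 s0) x" and wy: "dist w y \<le> dist (g1 s0) y"
  shows "w \<in> S"
proof -
  define f where "f = g1 s0"
  have nofr1: "\<not> (dist z x < dist f x \<and> dist z y < dist f y)" if z: "z \<in> path_image g1" for z
  proof -
    obtain s where s: "s \<in> {0..1}" "z = g1 s" using z unfolding path_image_def by auto
    show ?thesis
    proof (cases "s \<le> s0")
      case True then show ?thesis using slg[OF s1 s(1) _ True] s0 s(2) unfolding f_def by auto
    next
      case False then show ?thesis using slg[OF s1 _ s(1), of s0] s0 s(2) unfolding f_def by auto
    qed
  qed
  have nofr: "\<not> (dist z x < dist f x \<and> dist z y < dist f y)" if z: "z \<in> frontier S" for z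
  proof (cases "z \<in> path_image g1")
    case True then show ?thesis using nofr1 by blast
  next
    case False
    then have z2: "z \<in> path_image g2" using z fr by auto
    have "z \<notin> {x, y}" using False side_facts(3,4)[OF s1] unfolding path_image_def by force
    then obtain s where s: "s \<in> {0<..<1}" "z = g2 s" using in_P_inner[OF s2 z2] by auto
    then have "refl_line x y z \<in> path_image g1" using H2 by blast
    then show ?thesis using nofr1 dist_refl_x[OF xy] dist_refl_y[OF xy] by metis
  qed
  have fx: "f \<noteq> x" and fy: "f \<noteq> y" using side_inner[OF s1 s0] unfolding f_def by auto
  define d where "d = dist x y"
  have dpos: "d > 0" using xy unfolding d_def by simp
  have cd: "cmod (y - x) = d" unfolding d_def by (simp add: dist_norm norm_minus_commute)
  define af where "af = dist f x"
  define bf where "bf = dist f y"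
  have afp: "af > 0" and bfp: "bf > 0" using fx fy unfolding af_def bf_def by auto
  have sum: "af + bf > d"
  proof -
    have "Im (nrm x y f) \<noteq> 0" using off_line1[OF s0] unfolding f_def .
    then have "cmod (nrm x y f) + cmod (nrm x y f - 1) > 1" by (rule sum_gt)
    then have "d * (cmod (nrm x y f) + cmod (nrm x y f - 1)) > d * 1"
      using dpos by (intro mult_strict_left_mono) auto
    then show ?thesis unfolding af_def bf_def dist_x_nrm[OF xy] dist_y_nrm[OF xy] cd
      by (simp add: algebra_simps)
  qed
  define lam where "lam = (max 0 (1 - bf / d) + min 1 (af / d)) / 2"
  have l1: "max 0 (1 - bf / d) < min 1 (af / d)"
  proof -
    have "(af + bf) / d > 1" using sum dpos by simp
    then have "1 - bf / d < af / d" by (simp add: add_divide_distrib)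
    moreover have "0 < af / d" "1 - bf / d < 1" using afp bfp dpos by auto
    ultimately show ?thesis by simp
  qed
  have lam0: "0 \<le> lam" and lam1: "lam \<le> 1" unfolding lam_def using l1 by auto
  have lama: "lam * d < af"
  proof -
    have aux: "\<And>A B c. A < B \<Longrightarrow> B \<le> c \<Longrightarrow> (A + B)/2 < (c::real)" by (auto simp: field_simps)
    have "lam < af / d" unfolding lam_def using aux[OF l1 min.cobounded2[of 1 "af/d"]] .
    then show ?thesis using dpos by (simp add: field_simps)
  qed
  have lamb: "(1 - lam) * d < bf"
  proof -
    have aux: "\<And>A B c. A < B \<Longrightarrow> c \<le> A \<Longrightarrow> c < (A + B)/(2::real)" by (auto simp: field_simps)
    have "1 - bf / d < lam" unfolding lam_def using aux[OF l1 max.cobounded2[of "1 - bf/d" 0]] .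
    then show ?thesis using dpos by (simp add: field_simps)
  qed
  define w0 where "w0 = x + of_real lam * (y - x)"
  have w0S: "w0 \<in> S"
  proof -
    have "w0 = (1 - lam) *\<^sub>R x + lam *\<^sub>R y" unfolding w0_def scaleR_conv_of_real
      by (simp add: algebra_simps)
    then have "w0 \<in> closed_segment x y" using lam0 lam1 unfolding closed_segment_def by blast
    then show ?thesis using seg by blast
  qed
  have w0x: "dist w0 x = lam * d" unfolding w0_def dist_norm using lam0 cd by (simp add: norm_mult)
  have w0y: "dist w0 y = (1 - lam) * d"
  proof -
    have "w0 - y = of_real (lam - 1) * (y - x)" unfolding w0_def by (simp add: algebra_simps)
    then have "cmod (w0 - y) = \<bar>lam - 1\<bar> * d" using cd by (simp only: norm_mult norm_of_real)
    then show ?thesis unfolding dist_norm using lam1 by simp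
  qed
  define Q where "Q = ball x af \<inter> ball y bf"
  have w0Q: "w0 \<in> Q" unfolding Q_def using w0x w0y lama lamb by (simp add: dist_commute)
  have QS: "Q \<subseteq> S"
  proof (rule ccontr)
    assume "\<not> Q \<subseteq> S"
    then have "Q - S \<noteq> {}" by auto
    moreover have "Q \<inter> S \<noteq> {}" using w0Q w0S by auto
    moreover have "connected Q" unfolding Q_def by (intro convex_connected convex_Int) auto
    ultimately have "Q \<inter> frontier S \<noteq> {}" using connected_Int_frontier by blast
    then obtain z where "z \<in> frontier S" "z \<in> Q" by auto
    then show False using nofr[of z] unfolding Q_def af_def bf_def by (simp add: dist_commute)
  qed
  show "w \<in> S"
  proof (cases "w = w0")
    case True then show ?thesis using w0S by simp
  next
    case False
    let ?K = "cball x af \<inter> cball y bf"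
    have "open_segment w0 w \<subseteq> interior ?K"
    proof (rule in_interior_closure_convex_segment)
      show "convex ?K" by (intro convex_Int) auto
      show "w0 \<in> interior ?K" using w0Q unfolding Q_def by simp
      show "w \<in> closure ?K" using wx wy unfolding af_def bf_def f_def
        by (simp add: dist_commute closure_closed closed_Int)
    qed
    then have "open_segment w0 w \<subseteq> S" using QS unfolding Q_def by auto
    then have "closure (open_segment w0 w) \<subseteq> S" using cl closure_minimal by blast
    then show ?thesis using False by auto
  qed
qed

end
end

lemma cmod_mono_im:
  assumes "Re a = Re b" "\<bar>Im a\<bar> \<le> \<bar>Im b\<bar>"
  shows "cmod a \<le> cmod b"
proof -
  have "(Im a)^2 \<le> (Im b)^2" using assms(2) by (metis abs_ge_zero power2_abs power_mono)
  then show ?thesis unfolding cmod_def using assms(1) by (intro real_sqrt_le_mono) simp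
qed

context adorn begin

context
  assumes sl: "slender S x y"
begin

lemma Qfr:
  assumes f: "f \<in> frontier S" and wx: "dist w x \<le> dist f x" and wy: "dist w y \<le> dist f y"
  shows "w \<in> S"
proof -
  consider "f = x" | "f = y" | "f \<notin> {x, y}" by auto
  then show ?thesis
  proof cases
    case 1 then have "w = x" using wx by simp
    then show ?thesis using x_fr frS by auto
  next
    case 2 then have "w = y" using wy by simp
    then show ?thesis using y_fr frS by auto
  next
    case 3
    have "f \<in> path_image g1 \<or> f \<in> path_image g2" using f fr by auto
    then show ?thesis
    proof
      assume "f \<in> path_image g1"
      then obtain s where "s \<in> {0<..<1}" "f = g1 s" using in_P_inner[OF s1 _ 3] by auto
      then show ?thesis using Q1[OF sl] wx wy by blast
    next
      assume "f \<in> path_image g2"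
      then obtain s where "s \<in> {0<..<1}" "f = g2 s" using in_P_inner[OF s2 _ 3] by auto
      then show ?thesis using adorn.Q1[OF swap sl] wx wy by blast
    qed
  qed
qed

lemma lens_if_slender:
  assumes z: "z \<in> S" and wx: "dist w x \<le> dist z x" and wy: "dist w y \<le> dist z y"
  shows "w \<in> S"
proof -
  define e where "e = (if Im (nrm x y z) \<ge> 0 then \<i> else - \<i>)"
  define r where "r \<tau> = z + of_real \<tau> * ((y - x) * e)" for \<tau>
  define d where "d = cmod (y - x)"
  have dpos: "d > 0" using xy unfolding d_def by simp
  have ce: "cmod e = 1" unfolding e_def by simp
  have nr: "nrm x y (r \<tau>) = nrm x y z + of_real \<tau> * e" for \<tau>
    unfolding r_def nrm_def using xy by (simp add: field_simps)
  have mono: "dist (r \<tau>) x \<ge> dist z x \<and> dist (r \<tau>) y \<ge> dist z y" if t: "\<tau> \<ge> 0" for \<tau>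
  proof -
    have im: "\<bar>Im (nrm x y z)\<bar> \<le> \<bar>Im (nrm x y z + of_real \<tau> * e)\<bar>"
      using t unfolding e_def by auto
    have re: "Re (nrm x y z + of_real \<tau> * e) = Re (nrm x y z)" unfolding e_def by auto
    have 1: "cmod (nrm x y z) \<le> cmod (nrm x y (r \<tau>))" unfolding nr
      by (rule cmod_mono_im) (use re im in auto)
    have 2: "cmod (nrm x y z - 1) \<le> cmod (nrm x y (r \<tau>) - 1)" unfolding nr
      by (rule cmod_mono_im) (use re im in auto)
    show ?thesis unfolding dist_x_nrm[OF xy] dist_y_nrm[OF xy]
      using 1 2 dpos unfolding d_def by (auto intro: mult_left_mono)
  qed
  obtain B where B: "\<forall>w\<in>S. cmod w \<le> B" using bd unfolding bounded_iff by auto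
  define T where "T = (B + cmod z + 1) / d"
  have B0: "B \<ge> cmod z" using B z by auto
  have "B + cmod z + 1 \<ge> 0" using B0 norm_ge_zero[of z] by linarith
  then have T0: "T \<ge> 0" unfolding T_def using dpos by simp
  have "cmod (r T) \<ge> B + 1"
  proof -
    have "cmod (of_real T * ((y - x) * e)) = T * d" unfolding d_def using T0 ce
      by (simp add: norm_mult)
    also have "\<dots> = B + cmod z + 1" unfolding T_def using dpos by simp
    finally have "cmod (of_real T * ((y - x) * e)) = B + cmod z + 1" .
    moreover have "cmod (of_real T * ((y - x) * e)) - cmod (-z) \<le> cmod (r T)"
      unfolding r_def using norm_diff_ineq[of "of_real T * ((y - x) * e)" z] by (simp add: add.commute)
    ultimately show ?thesis by simp
  qed
  then have rT: "r T \<notin> S" using B by force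
  let ?C = "r ` {0..T}"
  have "connected ?C" unfolding r_def by (intro connected_continuous_image continuous_intros) auto
  moreover have "?C \<inter> S \<noteq> {}" using z T0 unfolding r_def by (auto intro!: image_eqI[of _ _ 0])
  moreover have "r T \<in> ?C" using T0 by auto
  then have "?C - S \<noteq> {}" using rT by blast
  ultimately have "?C \<inter> frontier S \<noteq> {}" using connected_Int_frontier by blast
  then obtain \<tau> where t: "\<tau> \<in> {0..T}" "r \<tau> \<in> frontier S" by blast
  then have "dist z x \<le> dist (r \<tau>) x" "dist z y \<le> dist (r \<tau>) y" using mono by auto
  then show ?thesis using Qfr[OF t(2)] wx wy by auto
qed

end
end

theorem mainTheorem3:
  fixes S :: "complex set" and x y :: complex
  assumes "symmetric_adornment S x y"
  shows "slender S x y \<longleftrightarrow>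
           (\<exists>R :: (real \<times> real) set. S = (\<Union>(r, s)\<in>R. cball x r \<inter> cball y s))"
proof -
  from assms obtain g1 g2 where "side S x y g1" "side S x y g2"
    "path_image g1 \<inter> path_image g2 = {x, y}" "frontier S = path_image g1 \<union> path_image g2"
    unfolding symmetric_adornment_def adornment_def by blast
  then interpret A: adorn S x y g1 g2 using assms by unfold_locales auto
  show ?thesis
  proof
    assume sl: "slender S x y"
    let ?R = "(\<lambda>p. (dist p x, dist p y)) ` S"
    have "S = (\<Union>(r, s)\<in>?R. cball x r \<inter> cball y s)"
    proof
      show "S \<subseteq> (\<Union>(r, s)\<in>?R. cball x r \<inter> cball y s)"
        by (auto simp: dist_commute)
      show "(\<Union>(r, s)\<in>?R. cball x r \<inter> cball y s) \<subseteq> S"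
        using A.lens_if_slender[OF sl] by (auto simp: dist_commute)
    qed
    then show "\<exists>R :: (real \<times> real) set. S = (\<Union>(r, s)\<in>R. cball x r \<inter> cball y s)" by blast
  next
    assume "\<exists>R :: (real \<times> real) set. S = (\<Union>(r, s)\<in>R. cball x r \<inter> cball y s)"
    then obtain R :: "(real \<times> real) set" where R: "S = (\<Union>(r, s)\<in>R. cball x r \<inter> cball y s)" by blast
    have down: "w \<in> S" if "z \<in> S" "dist w x \<le> dist z x" "dist w y \<le> dist z y" for z w
    proof -
      from that(1) R obtain r s where "(r, s) \<in> R" "dist x z \<le> r" "dist y z \<le> s" by auto
      then have "w \<in> cball x r \<inter> cball y s" using that(2,3) by (auto simp: dist_commute)
      then show ?thesis using \<open>(r, s) \<in> R\<close> R by blast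
    qed
    show "slender S x y" using A.slender_if_down down by blast
  qed
qed

end
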